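(* Let $0<\rho\le 1/2$, $0<s\le1$, and let $A=2/(\rho s)$. For every twist system with parameter $\rho$ on $n\ge2$ points, its $s$-energy satisfies $$\mathcal{E}(s)\le \sum_{1\le i<j\le n}A^{\,j-i}.$$ In particular $\mathcal{E}(s)\le 2/(\rho s)$ if $n=2$, and $\mathcal{E}(s)< 2\,(2/(\rho s))^{n-1}$ if $n>2$.
   Context: A twist system with parameter $\rho\in(0,1/2]$ on $n$ points is a sequence of configurations $x^{(t)}=(x_1\le x_2\le\dots\le x_n)\in[0,1]^n$, $t\ge1$, such that each transition from $x=x^{(t)}$ to $y=x^{(t+1)}$ is as follows: some integers $1\le u<v\le n$ are chosen (depending on $t$), and for $u\le i\le v$ the twist of $x_i$ is the interval $$\tau_i=\bigl[x_u+\rho(x_{\min\{i+1,v\}}-x_u),\; x_v-\rho(x_v-x_{\max\{i-1,u\}})\bigr];$$ the new configuration must satisfy (i) $y_1\le\dots\le y_n$, and (ii) $y_i\in\tau_i$ for $u\le i\le v$ and $y_i=x_i$ otherwise. The choices of $u,v$ and of the $y_i$ are otherwise arbitrary. The $s$-energy of the twist system is $\mathcal{E}(s)=\sum_{t\ge1}(x_v-x_u)^s$, where $u,v$ are those chosen at step $t$ and $x=x^{(t)}$. *)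

theory Defs
  imports Complex_Main
begin

text \<open>A configuration on n points is a function x :: nat \<Rightarrow> real, of which only
  the values x 1, ..., x n are relevant; it must be sorted and lie in [0,1].\<close>
definition config :: "nat \<Rightarrow> (nat \<Rightarrow> real) \<Rightarrow> bool" where
  "config n x \<longleftrightarrow> (\<forall>i\<in>{1..n}. 0 \<le> x i \<and> x i \<le> 1) \<and>
                   (\<forall>i j. 1 \<le> i \<longrightarrow> i \<le> j \<longrightarrow> j \<le> n \<longrightarrow> x i \<le> x j)"

definition twist :: "real \<Rightarrow> (nat \<Rightarrow> real) \<Rightarrow> nat \<Rightarrow> nat \<Rightarrow> nat \<Rightarrow> real set" where
  "twist \<rho> x u v i = {x u + \<rho> * (x (min (i + 1) v) - x u) .. x v - \<rho> * (x v - x (max (i - 1) u))}"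

definition twist_step :: "real \<Rightarrow> nat \<Rightarrow> (nat \<Rightarrow> real) \<Rightarrow> (nat \<Rightarrow> real) \<Rightarrow> nat \<Rightarrow> nat \<Rightarrow> bool" where
  "twist_step \<rho> n x y u v \<longleftrightarrow> 1 \<le> u \<and> u < v \<and> v \<le> n \<and> config n y \<and>
     (\<forall>i. u \<le> i \<and> i \<le> v \<longrightarrow> y i \<in> twist \<rho> x u v i) \<and>
     (\<forall>i\<in>{1..n}. (i < u \<or> v < i) \<longrightarrow> y i = x i)"

text \<open>A twist system: configurations x t (t = 0,1,2,... corresponds to t = 1,2,3,...
  in the paper) with the chosen pairs (u t, v t) at each step.\<close>
definition twist_system :: "real \<Rightarrow> nat \<Rightarrow> (nat \<Rightarrow> nat \<Rightarrow> real) \<Rightarrow> (nat \<Rightarrow> nat) \<Rightarrow> (nat \<Rightarrow> nat) \<Rightarrow> bool" where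
  "twist_system \<rho> n x u v \<longleftrightarrow> (\<forall>t. config n (x t)) \<and>
     (\<forall>t. twist_step \<rho> n (x t) (x (Suc t)) (u t) (v t))"

definition energy_term :: "real \<Rightarrow> (nat \<Rightarrow> nat \<Rightarrow> real) \<Rightarrow> (nat \<Rightarrow> nat) \<Rightarrow> (nat \<Rightarrow> nat) \<Rightarrow> nat \<Rightarrow> real" where
  "energy_term s x u v t = (x t (v t) - x t (u t)) powr s"

end

theory Submission
  imports Defs "HOL-Analysis.Convex"
begin

lemma bern:
  fixes s a t :: real
  assumes "0 < s" "s \<le> 1" "0 < a" "0 \<le> t" "t \<le> a"
  shows "(a - t) powr s \<le> a powr (s-1) * (a - s*t)"
proof (cases "t = a")
  case True
  have "0 \<le> a - s*t" using assms True by (smt (verit) mult_left_le_one_le)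
  then show ?thesis using True by simp
next
  case False
  hence pos: "0 < a - t" using assms by simp
  have "(a - t) powr s * a powr (1-s) \<le> s*(a-t) + (1-s)*a"
    using Youngs_inequality_0[of s "1-s" "a-t" a] assms pos by simp
  also have "\<dots> = a - s*t" by (simp add: algebra_simps)
  finally have h: "(a - t) powr s * a powr (1-s) \<le> a - s*t" .
  have e: "a powr (1-s) * a powr (s-1) = 1" using assms by (simp add: powr_add[symmetric])
  have "(a - t) powr s = (a - t) powr s * a powr (1-s) * a powr (s-1)"
    using e by (simp add: mult.assoc)
  also have "\<dots> \<le> (a - s*t) * a powr (s-1)"
    using h by (intro mult_right_mono) auto
  finally show ?thesis by (simp add: mult.commute)
qed

lemma lowpow:
  fixes s a g :: real
  assumes "0 < s" "s \<le> 1" "0 < a" "0 \<le> g" "g \<le> a"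
  shows "a powr (s-1) * (a - g) \<le> (a - g) powr s"
proof (cases "g = a")
  case True then show ?thesis by simp
next
  case False
  hence pos: "0 < a - g" using assms by simp
  have "a powr (s-1) \<le> (a - g) powr (s-1)"
    using powr_mono2'[of "s-1" "a-g" a] assms pos by simp
  hence "a powr (s-1) * (a - g) \<le> (a - g) powr (s-1) * (a - g)"
    using pos by (intro mult_right_mono) auto
  also have "\<dots> = (a - g) powr (s-1) * (a - g) powr 1" using pos by simp
  also have "\<dots> = (a - g) powr s" by (subst powr_add[symmetric]) simp
  finally show ?thesis .
qed

lemma PL:
  fixes s a g t b :: real
  assumes "0 < s" "s \<le> 1" "0 \<le> a" "0 \<le> g" "g \<le> a" "0 \<le> t" "t \<le> a" "0 \<le> b" "b \<le> a - t"
  shows "a powr (s-1) * (s*t - g) \<le> (a - g) powr s - b powr s"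
proof (cases "a = 0")
  case True
  then show ?thesis using assms by simp
next
  case False
  hence a: "0 < a" using assms by simp
  have "b powr s \<le> (a - t) powr s" using assms by (intro powr_mono2) auto
  also have "\<dots> \<le> a powr (s-1) * (a - s*t)" using bern assms a by blast
  finally have 1: "b powr s \<le> a powr (s-1) * (a - s*t)" .
  have 2: "a powr (s-1) * (a - g) \<le> (a - g) powr s" using lowpow assms a by blast
  have "a powr (s-1) * (s*t - g) = a powr (s-1) * (a - g) - a powr (s-1) * (a - s*t)"
    by (simp add: algebra_simps)
  then show ?thesis using 1 2 by linarith
qed

lemma chain_up:
  fixes e g :: "nat \<Rightarrow> real" and c :: real
  assumes "m \<le> k"
    and E: "\<And>j. m \<le> j \<Longrightarrow> j < k \<Longrightarrow> c * e (Suc j) = 2 * e j"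
    and N: "\<And>j. m \<le> j \<Longrightarrow> j \<le> k \<Longrightarrow> 0 \<le> e j * g j"
  shows "e m * g m - e k * g k \<le> (\<Sum>j\<in>{Suc m..k}. e j * (c * g (j-1) - g j))"
  using assms(1) E N
proof (induction k rule: dec_induct)
  case base
  then show ?case by simp
next
  case (step k)
  have IH: "e m * g m - e k * g k \<le> (\<Sum>j\<in>{Suc m..k}. e j * (c * g (j-1) - g j))"
    using step by auto
  have "e (Suc k) * (c * g k - g (Suc k)) = 2 * e k * g k - e (Suc k) * g (Suc k)"
    using step.prems(1)[of k] step.hyps by (simp add: algebra_simps)
  moreover have "0 \<le> e k * g k" using step.prems(2)[of k] step.hyps by simp
  moreover have "(\<Sum>j\<in>{Suc m..Suc k}. e j * (c * g (j-1) - g j)) =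
      (\<Sum>j\<in>{Suc m..k}. e j * (c * g (j-1) - g j)) + e (Suc k) * (c * g k - g (Suc k))"
    using step.hyps by (simp add: sum.cl_ivl_Suc)
  ultimately show ?case using IH by linarith
qed

lemma chain_down:
  fixes e h :: "nat \<Rightarrow> real" and c :: real
  assumes "m \<le> k"
    and E: "\<And>i. m \<le> i \<Longrightarrow> i < k \<Longrightarrow> c * e i = 2 * e (Suc i)"
    and N: "\<And>i. m \<le> i \<Longrightarrow> i \<le> k \<Longrightarrow> 0 \<le> e i * h i"
  shows "e k * h k - e m * h m \<le> (\<Sum>i\<in>{m..<k}. e i * (c * h (Suc i) - h i))"
  using assms(1) E N
proof (induction k rule: dec_induct)
  case base
  then show ?case by simp
next
  case (step k)
  have IH: "e k * h k - e m * h m \<le> (\<Sum>i\<in>{m..<k}. e i * (c * h (Suc i) - h i))"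
    using step by auto
  have "e k * (c * h (Suc k) - h k) = 2 * e (Suc k) * h (Suc k) - e k * h k"
    using step.prems(1)[of k] step.hyps by (simp add: algebra_simps)
  moreover have "0 \<le> e (Suc k) * h (Suc k)" using step.prems(2)[of "Suc k"] step.hyps by simp
  moreover have "(\<Sum>i\<in>{m..<Suc k}. e i * (c * h (Suc i) - h i)) =
      (\<Sum>i\<in>{m..<k}. e i * (c * h (Suc i) - h i)) + e k * (c * h (Suc k) - h k)"
    using step.hyps by simp
  ultimately show ?case using IH by linarith
qed

lemma chain_Q:
  fixes W Q :: "nat \<Rightarrow> real" and c :: real
  assumes "m \<le> k"
    and E: "\<And>i. m \<le> i \<Longrightarrow> i < k \<Longrightarrow> 1 + W (Suc i) \<le> c * W i"
    and N: "\<And>i. m \<le> i \<Longrightarrow> i \<le> k \<Longrightarrow> 0 \<le> Q i"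
    and NW: "\<And>i. m \<le> i \<Longrightarrow> i \<le> k \<Longrightarrow> 0 \<le> W i"
  shows "(\<Sum>i\<in>{m..<k}. Q (Suc i)) + W k * Q k - W m * Q m \<le> (\<Sum>i\<in>{m..<k}. W i * (c * Q (Suc i) - Q i))"
  using assms(1) E N NW
proof (induction k rule: dec_induct)
  case base
  then show ?case by simp
next
  case (step k)
  have IH: "(\<Sum>i\<in>{m..<k}. Q (Suc i)) + W k * Q k - W m * Q m \<le> (\<Sum>i\<in>{m..<k}. W i * (c * Q (Suc i) - Q i))"
    using step by auto
  have "(1 + W (Suc k)) * Q (Suc k) \<le> c * W k * Q (Suc k)"
    using step.prems(1)[of k] step.prems(2)[of "Suc k"] step.hyps by (intro mult_right_mono) auto
  then show ?case using IH step.hyps by (simp add: algebra_simps)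
qed

lemma step_decrease:
  fixes \<rho> s :: real and n u v :: nat and x y :: "nat \<Rightarrow> real"
  assumes rp: "0 < \<rho>" "\<rho> \<le> 1/2" and sp: "0 < s" "s \<le> 1"
    and cx: "config n x" and st: "twist_step \<rho> n x y u v"
  defines "A \<equiv> 2 / (\<rho> * s)"
  defines "D \<equiv> (\<lambda>i j. A ^ (j - i) * ((x j - x i) powr s - (y j - y i) powr s))"
  shows "(x v - x u) powr s \<le> (\<Sum>i\<in>{1..n}. \<Sum>j\<in>{i<..n}. D i j)"
proof -
  define c where "c = \<rho> * s"
  have cA: "c * A = 2" using rp sp unfolding A_def c_def by simp
  have Apos: "0 < A" using rp sp unfolding A_def by simp
  have c1: "c \<le> 1" using mult_le_one[of \<rho> s] rp sp unfolding c_def by simp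
  have cpos: "0 < c" using rp sp unfolding c_def by simp
  have uv: "1 \<le> u" "u < v" "v \<le> n" and cy: "config n y"
    and tw: "\<And>i. u \<le> i \<Longrightarrow> i \<le> v \<Longrightarrow> y i \<in> twist \<rho> x u v i"
    and same: "\<And>i. 1 \<le> i \<Longrightarrow> i \<le> n \<Longrightarrow> i < u \<or> v < i \<Longrightarrow> y i = x i"
    using st unfolding twist_step_def by auto
  have xs: "\<And>i j. 1 \<le> i \<Longrightarrow> i \<le> j \<Longrightarrow> j \<le> n \<Longrightarrow> x i \<le> x j"
    using cx unfolding config_def by auto
  have ys: "\<And>i j. 1 \<le> i \<Longrightarrow> i \<le> j \<Longrightarrow> j \<le> n \<Longrightarrow> y i \<le> y j"
    using cy unfolding config_def by auto
  have lo: "\<And>i. u \<le> i \<Longrightarrow> i \<le> v \<Longrightarrow> x u + \<rho> * (x (min (i + 1) v) - x u) \<le> y i"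
    using tw unfolding twist_def by auto
  have hi: "\<And>i. u \<le> i \<Longrightarrow> i \<le> v \<Longrightarrow> y i \<le> x v - \<rho> * (x v - x (max (i - 1) u))"
    using tw unfolding twist_def by auto
  have Dz: "\<And>i j. 1 \<le> i \<Longrightarrow> i \<le> n \<Longrightarrow> 1 \<le> j \<Longrightarrow> j \<le> n \<Longrightarrow> (i < u \<or> v < i) \<Longrightarrow> (j < u \<or> v < j) \<Longrightarrow> D i j = 0"
    unfolding D_def using same by simp

  have left: "0 \<le> (\<Sum>j\<in>{u..v}. D i j)" if i1: "1 \<le> i" and iu: "i < u" for i
  proof -
    define \<alpha> where "\<alpha> = x v - x i"
    define g where "g = (\<lambda>j. x v - x j)"
    have yi: "y i = x i" using same i1 iu uv by simp
    have tm: "\<alpha> powr (s-1) * (A ^ (j - i) * (c * g (max (j-1) u) - g j)) \<le> D i j"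
      if j: "u \<le> j" "j \<le> v" for j
    proof -
      have "\<alpha> powr (s-1) * (s * (\<rho> * g (max (j-1) u)) - g j) \<le> (\<alpha> - g j) powr s - (y j - x i) powr s"
      proof (rule PL)
        show "0 < s" "s \<le> 1" using sp by auto
        show "0 \<le> \<alpha>" unfolding \<alpha>_def using xs[of i v] i1 iu uv by simp
        show "0 \<le> g j" unfolding g_def using xs[of j v] j uv by simp
        show "g j \<le> \<alpha>" unfolding g_def \<alpha>_def using xs[of i j] j uv i1 iu by simp
        have gj': "0 \<le> g (max (j-1) u)" unfolding g_def using xs[of "max (j-1) u" v] j uv by simp
        have gj'': "g (max (j-1) u) \<le> \<alpha>" unfolding g_def \<alpha>_def using xs[of i "max (j-1) u"] j uv i1 iu by simp
        show "0 \<le> \<rho> * g (max (j-1) u)" using gj' rp by simp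
        show "\<rho> * g (max (j-1) u) \<le> \<alpha>" using gj' gj'' rp mult_left_le_one_le[of "g (max (j-1) u)" \<rho>]
          by linarith
        show "0 \<le> y j - x i" using ys[of i j] yi i1 iu j uv by simp
        show "y j - x i \<le> \<alpha> - \<rho> * g (max (j-1) u)" using hi[of j] j unfolding \<alpha>_def g_def by simp
      qed
      moreover have F2: "\<alpha> - g j = x j - x i" unfolding \<alpha>_def g_def by simp
      moreover have F3: "s * (\<rho> * g (max (j-1) u)) = c * g (max (j-1) u)" unfolding c_def by simp
      ultimately have "\<alpha> powr (s-1) * (c * g (max (j-1) u) - g j) \<le> (x j - x i) powr s - (y j - y i) powr s"
        using yi by (simp only: F2 F3 yi)
      hence "A ^ (j - i) * (\<alpha> powr (s-1) * (c * g (max (j-1) u) - g j)) \<le> D i j"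
        unfolding D_def using Apos by (intro mult_left_mono) auto
      then show ?thesis by (simp add: algebra_simps)
    qed
    have inner: "0 \<le> (\<Sum>j\<in>{u..v}. A ^ (j - i) * (c * g (max (j-1) u) - g j))"
    proof -
      have split: "{u..v} = insert u {Suc u..v}" using uv by auto
      have "(\<Sum>j\<in>{u..v}. A ^ (j - i) * (c * g (max (j-1) u) - g j)) =
          A ^ (u - i) * (c * g u - g u) + (\<Sum>j\<in>{Suc u..v}. A ^ (j - i) * (c * g (j-1) - g j))"
      proof -
        have "(\<Sum>j\<in>{Suc u..v}. A ^ (j - i) * (c * g (max (j-1) u) - g j)) =
            (\<Sum>j\<in>{Suc u..v}. A ^ (j - i) * (c * g (j-1) - g j))"
        proof (rule sum.cong[OF refl])
          fix j assume "j \<in> {Suc u..v}"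
          hence "max (j-1) u = j-1" by auto
          then show "A ^ (j - i) * (c * g (max (j-1) u) - g j) = A ^ (j - i) * (c * g (j-1) - g j)" by simp
        qed
        then show ?thesis unfolding split by simp
      qed
      moreover have "A ^ (u - i) * g u - A ^ (v - i) * g v \<le> (\<Sum>j\<in>{Suc u..v}. A ^ (j - i) * (c * g (j-1) - g j))"
      proof (rule chain_up)
        show "u \<le> v" using uv by simp
        fix j assume "u \<le> j" "j < v"
        then have "Suc j - i = Suc (j - i)" using iu by simp
        then show "c * A ^ (Suc j - i) = 2 * A ^ (j - i)" using cA by (simp add: mult.assoc[symmetric])
      next
        fix j assume "u \<le> j" "j \<le> v"
        then show "0 \<le> A ^ (j - i) * g j" unfolding g_def using xs[of j v] uv Apos by simp
      qed
      moreover have "g v = 0" unfolding g_def by simp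
      moreover have "0 \<le> A ^ (u - i) * g u" unfolding g_def using xs[of u v] uv Apos by simp
      ultimately show ?thesis using cpos
        by (smt (verit, best) mult_nonneg_nonneg right_diff_distrib' mult.left_commute)
    qed
    have "(\<Sum>j\<in>{u..v}. \<alpha> powr (s-1) * (A ^ (j - i) * (c * g (max (j-1) u) - g j))) \<le> (\<Sum>j\<in>{u..v}. D i j)"
      by (rule sum_mono) (use tm in auto)
    moreover have "(\<Sum>j\<in>{u..v}. \<alpha> powr (s-1) * (A ^ (j - i) * (c * g (max (j-1) u) - g j))) =
       \<alpha> powr (s-1) * (\<Sum>j\<in>{u..v}. A ^ (j - i) * (c * g (max (j-1) u) - g j))"
      by (simp add: sum_distrib_left)
    moreover have "0 \<le> \<alpha> powr (s-1) * (\<Sum>j\<in>{u..v}. A ^ (j - i) * (c * g (max (j-1) u) - g j))"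
      using inner by simp
    ultimately show ?thesis by linarith
  qed

  have right: "0 \<le> (\<Sum>i\<in>{u..v}. D i j)" if jn: "j \<le> n" and vj: "v < j" for j
  proof -
    define \<beta> where "\<beta> = x j - x u"
    define h where "h = (\<lambda>i. x i - x u)"
    have yj: "y j = x j" using same jn vj uv by simp
    have tm: "\<beta> powr (s-1) * (A ^ (j - i) * (c * h (min (i+1) v) - h i)) \<le> D i j"
      if i: "u \<le> i" "i \<le> v" for i
    proof -
      have "\<beta> powr (s-1) * (s * (\<rho> * h (min (i+1) v)) - h i) \<le> (\<beta> - h i) powr s - (x j - y i) powr s"
      proof (rule PL)
        show "0 < s" "s \<le> 1" using sp by auto
        show "0 \<le> \<beta>" unfolding \<beta>_def using xs[of u j] jn vj uv by simp
        show "0 \<le> h i" unfolding h_def using xs[of u i] i uv by simp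
        show "h i \<le> \<beta>" unfolding h_def \<beta>_def using xs[of i j] i uv jn vj by simp
        have gj': "0 \<le> h (min (i+1) v)" unfolding h_def using xs[of u "min (i+1) v"] i uv by simp
        have gj'': "h (min (i+1) v) \<le> \<beta>" unfolding h_def \<beta>_def using xs[of "min (i+1) v" j] i uv jn vj by simp
        show "0 \<le> \<rho> * h (min (i+1) v)" using gj' rp by simp
        show "\<rho> * h (min (i+1) v) \<le> \<beta>" using gj' gj'' rp mult_left_le_one_le[of "h (min (i+1) v)" \<rho>]
          by linarith
        show "0 \<le> x j - y i" using ys[of i j] yj i jn vj uv by simp
        show "x j - y i \<le> \<beta> - \<rho> * h (min (i+1) v)" using lo[of i] i unfolding \<beta>_def h_def by simp
      qed
      moreover have F2: "\<beta> - h i = x j - x i" unfolding \<beta>_def h_def by simp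
      moreover have F3: "s * (\<rho> * h (min (i+1) v)) = c * h (min (i+1) v)" unfolding c_def by simp
      ultimately have "\<beta> powr (s-1) * (c * h (min (i+1) v) - h i) \<le> (x j - x i) powr s - (y j - y i) powr s"
        using yj by (simp only: F2 F3 yj)
      hence "A ^ (j - i) * (\<beta> powr (s-1) * (c * h (min (i+1) v) - h i)) \<le> D i j"
        unfolding D_def using Apos by (intro mult_left_mono) auto
      then show ?thesis by (simp add: algebra_simps)
    qed
    have inner: "0 \<le> (\<Sum>i\<in>{u..v}. A ^ (j - i) * (c * h (min (i+1) v) - h i))"
    proof -
      have split: "{u..v} = insert v {u..<v}" using uv by auto
      have "(\<Sum>i\<in>{u..v}. A ^ (j - i) * (c * h (min (i+1) v) - h i)) =
          A ^ (j - v) * (c * h v - h v) + (\<Sum>i\<in>{u..<v}. A ^ (j - i) * (c * h (Suc i) - h i))"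
      proof -
        have "(\<Sum>i\<in>{u..<v}. A ^ (j - i) * (c * h (min (i+1) v) - h i)) =
            (\<Sum>i\<in>{u..<v}. A ^ (j - i) * (c * h (Suc i) - h i))"
        proof (rule sum.cong[OF refl])
          fix i assume "i \<in> {u..<v}"
          hence "min (i+1) v = Suc i" by auto
          then show "A ^ (j - i) * (c * h (min (i+1) v) - h i) = A ^ (j - i) * (c * h (Suc i) - h i)" by simp
        qed
        then show ?thesis unfolding split by simp
      qed
      moreover have "A ^ (j - v) * h v - A ^ (j - u) * h u \<le> (\<Sum>i\<in>{u..<v}. A ^ (j - i) * (c * h (Suc i) - h i))"
      proof (rule chain_down)
        show "u \<le> v" using uv by simp
        fix i assume "u \<le> i" "i < v"
        then have "j - i = Suc (j - Suc i)" using vj by simp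
        then show "c * A ^ (j - i) = 2 * A ^ (j - Suc i)" using cA by (simp add: mult.assoc[symmetric])
      next
        fix i assume "u \<le> i" "i \<le> v"
        then show "0 \<le> A ^ (j - i) * h i" unfolding h_def using xs[of u i] uv Apos by simp
      qed
      moreover have "h u = 0" unfolding h_def by simp
      moreover have "0 \<le> A ^ (j - v) * h v" unfolding h_def using xs[of u v] uv Apos by simp
      ultimately show ?thesis using cpos
        by (smt (verit, best) mult_nonneg_nonneg right_diff_distrib' mult.left_commute)
    qed
    have "(\<Sum>i\<in>{u..v}. \<beta> powr (s-1) * (A ^ (j - i) * (c * h (min (i+1) v) - h i))) \<le> (\<Sum>i\<in>{u..v}. D i j)"
      by (rule sum_mono) (use tm in auto)
    moreover have "(\<Sum>i\<in>{u..v}. \<beta> powr (s-1) * (A ^ (j - i) * (c * h (min (i+1) v) - h i))) =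
       \<beta> powr (s-1) * (\<Sum>i\<in>{u..v}. A ^ (j - i) * (c * h (min (i+1) v) - h i))"
      by (simp add: sum_distrib_left)
    moreover have "0 \<le> \<beta> powr (s-1) * (\<Sum>i\<in>{u..v}. A ^ (j - i) * (c * h (min (i+1) v) - h i))"
      using inner by simp
    ultimately show ?thesis by linarith
  qed

  define d where "d = x v - x u"
  define Q where "Q = (\<lambda>i. x i - x u)"
  define P where "P = (\<lambda>j. x v - x j)"
  define W where "W = (\<lambda>i. \<Sum>j\<in>{i<..v}. A ^ (j - i))"
  have d0: "0 \<le> d" unfolding d_def using xs[of u v] uv by simp
  have Qnn: "0 \<le> Q i" "Q i \<le> d" if "u \<le> i" "i \<le> v" for i
    unfolding Q_def d_def using xs[of u i] xs[of i v] that uv by auto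
  have Pnn: "0 \<le> P i" "P i \<le> d" if "u \<le> i" "i \<le> v" for i
    unfolding P_def d_def using xs[of u i] xs[of i v] that uv by auto
  have Wnn: "0 \<le> W i" for i unfolding W_def using Apos by (intro sum_nonneg) auto
  have inpair: "d powr (s-1) * (A ^ (j - i) * (c * Q (Suc i) - Q i) + A ^ (j - i) * (c * P (j-1) - P j)) \<le> D i j"
    if ij: "u \<le> i" "i < j" "j \<le> v" for i j
  proof -
    have "d powr (s-1) * (s * (\<rho> * (Q (Suc i) + P (j-1))) - (Q i + P j)) \<le> (d - (Q i + P j)) powr s - (y j - y i) powr s"
    proof (rule PL)
      show "0 < s" "s \<le> 1" using sp by auto
      show "0 \<le> d" by (rule d0)
      show "0 \<le> Q i + P j" using Qnn[of i] Pnn[of j] ij by simp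
      show "Q i + P j \<le> d" unfolding Q_def P_def d_def using xs[of i j] ij uv by simp
      have q: "0 \<le> Q (Suc i)" "Q (Suc i) \<le> d" using Qnn[of "Suc i"] ij by auto
      have p: "0 \<le> P (j-1)" "P (j-1) \<le> d" using Pnn[of "j-1"] ij by auto
      show "0 \<le> \<rho> * (Q (Suc i) + P (j-1))" using q p rp by simp
      have "\<rho> * (Q (Suc i) + P (j-1)) \<le> (1/2) * (2 * d)"
        using q p rp by (intro mult_mono) auto
      then show "\<rho> * (Q (Suc i) + P (j-1)) \<le> d" by simp
      show "0 \<le> y j - y i" using ys[of i j] ij uv by simp
      have "min (i+1) v = Suc i" "max (j-1) u = j-1" using ij by auto
      then show "y j - y i \<le> d - \<rho> * (Q (Suc i) + P (j-1))"
        using lo[of i] hi[of j] ij unfolding d_def Q_def P_def by (simp add: algebra_simps)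
    qed
    moreover have F2: "d - (Q i + P j) = x j - x i" unfolding d_def Q_def P_def by simp
    moreover have F3: "s * (\<rho> * (Q (Suc i) + P (j-1))) - (Q i + P j) = (c * Q (Suc i) - Q i) + (c * P (j-1) - P j)"
      unfolding c_def by (simp add: algebra_simps)
    ultimately have "d powr (s-1) * ((c * Q (Suc i) - Q i) + (c * P (j-1) - P j)) \<le> (x j - x i) powr s - (y j - y i) powr s"
      by (simp only: F2 F3)
    hence "A ^ (j - i) * (d powr (s-1) * ((c * Q (Suc i) - Q i) + (c * P (j-1) - P j))) \<le> D i j"
      unfolding D_def using Apos by (intro mult_left_mono) auto
    then show ?thesis by (simp add: algebra_simps)
  qed
  have Ppart: "0 \<le> (\<Sum>j\<in>{i<..v}. A ^ (j - i) * (c * P (j-1) - P j))" if i: "u \<le> i" "i \<le> v" for i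
  proof -
    have "A ^ (i - i) * P i - A ^ (v - i) * P v \<le> (\<Sum>j\<in>{Suc i..v}. A ^ (j - i) * (c * P (j-1) - P j))"
    proof (rule chain_up)
      show "i \<le> v" using i by simp
      fix j assume "i \<le> j" "j < v"
      then have "Suc j - i = Suc (j - i)" by simp
      then show "c * A ^ (Suc j - i) = 2 * A ^ (j - i)" using cA by (simp add: mult.assoc[symmetric])
    next
      fix j assume "i \<le> j" "j \<le> v"
      then show "0 \<le> A ^ (j - i) * P j" using Pnn[of j] i Apos by simp
    qed
    moreover have "P v = 0" unfolding P_def by simp
    moreover have "0 \<le> P i" using Pnn i by simp
    moreover have "{Suc i..v} = {i<..v}" by auto
    ultimately show ?thesis by simp
  qed
  have Wrec: "1 + W (Suc i) \<le> c * W i" if i: "u \<le> i" "i < v" for i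
  proof -
    have split: "{i<..v} = insert (Suc i) {Suc i<..v}" using i by auto
    have "(\<Sum>j\<in>{Suc i<..v}. A ^ (j - i)) = (\<Sum>j\<in>{Suc i<..v}. A * A ^ (j - Suc i))"
    proof (rule sum.cong[OF refl])
      fix j assume "j \<in> {Suc i<..v}"
      hence "j - i = Suc (j - Suc i)" by auto
      then show "A ^ (j - i) = A * A ^ (j - Suc i)" by simp
    qed
    hence "W i = A + A * W (Suc i)" unfolding W_def split by (simp add: sum_distrib_left)
    hence "c * W i = 2 + 2 * W (Suc i)" using cA by (simp add: algebra_simps)
    then show ?thesis using Wnn[of "Suc i"] by simp
  qed
  have Qpart: "d \<le> (\<Sum>i\<in>{u..v}. W i * (c * Q (Suc i) - Q i))"
  proof -
    have "(\<Sum>i\<in>{u..<v}. Q (Suc i)) + W v * Q v - W u * Q u \<le> (\<Sum>i\<in>{u..<v}. W i * (c * Q (Suc i) - Q i))"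
    proof (rule chain_Q)
      show "u \<le> v" using uv by simp
    next
      fix i assume "u \<le> i" "i < v" then show "1 + W (Suc i) \<le> c * W i" by (rule Wrec)
    next
      fix i assume "u \<le> i" "i \<le> v" then show "0 \<le> Q i" using Qnn by simp
    next
      fix i show "0 \<le> W i" by (rule Wnn)
    qed
    moreover have "W v = 0" unfolding W_def by simp
    moreover have "Q u = 0" unfolding Q_def by simp
    moreover have "Q (Suc (v-1)) \<le> (\<Sum>i\<in>{u..<v}. Q (Suc i))"
      by (rule member_le_sum[where f="\<lambda>i. Q (Suc i)"]) (use uv Qnn in auto)
    moreover have "Suc (v-1) = v" using uv by simp
    moreover have "Q v = d" unfolding Q_def d_def by simp
    moreover have "(\<Sum>i\<in>{u..v}. W i * (c * Q (Suc i) - Q i)) = (\<Sum>i\<in>{u..<v}. W i * (c * Q (Suc i) - Q i)) + W v * (c * Q (Suc v) - Q v)"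
      using uv by (simp add: sum.last_plus)
    ultimately show ?thesis by simp
  qed
  have inside: "d powr s \<le> (\<Sum>i\<in>{u..v}. \<Sum>j\<in>{i<..v}. D i j)"
  proof -
    have "(\<Sum>i\<in>{u..v}. d powr (s-1) * (W i * (c * Q (Suc i) - Q i))) \<le> (\<Sum>i\<in>{u..v}. \<Sum>j\<in>{i<..v}. D i j)"
    proof (rule sum_mono)
      fix i assume i: "i \<in> {u..v}"
      have "(\<Sum>j\<in>{i<..v}. d powr (s-1) * (A ^ (j - i) * (c * Q (Suc i) - Q i) + A ^ (j - i) * (c * P (j-1) - P j)))
            \<le> (\<Sum>j\<in>{i<..v}. D i j)"
        by (rule sum_mono) (use inpair i in auto)
      moreover have "(\<Sum>j\<in>{i<..v}. d powr (s-1) * (A ^ (j - i) * (c * Q (Suc i) - Q i) + A ^ (j - i) * (c * P (j-1) - P j)))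
          = d powr (s-1) * (W i * (c * Q (Suc i) - Q i)) + d powr (s-1) * (\<Sum>j\<in>{i<..v}. A ^ (j - i) * (c * P (j-1) - P j))"
      proof -
        have "(\<Sum>j\<in>{i<..v}. A ^ (j - i) * (c * Q (Suc i) - Q i)) = W i * (c * Q (Suc i) - Q i)"
          unfolding W_def by (simp add: sum_distrib_right)
        then show ?thesis
          by (simp only: distrib_left sum.distrib sum_distrib_left[symmetric])
      qed
      moreover have "0 \<le> d powr (s-1) * (\<Sum>j\<in>{i<..v}. A ^ (j - i) * (c * P (j-1) - P j))"
        using Ppart i by simp
      ultimately show "d powr (s-1) * (W i * (c * Q (Suc i) - Q i)) \<le> (\<Sum>j\<in>{i<..v}. D i j)" by linarith
    qed
    moreover have "(\<Sum>i\<in>{u..v}. d powr (s-1) * (W i * (c * Q (Suc i) - Q i))) = d powr (s-1) * (\<Sum>i\<in>{u..v}. W i * (c * Q (Suc i) - Q i))"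
      by (simp add: sum_distrib_left)
    moreover have "d powr (s-1) * d \<le> d powr (s-1) * (\<Sum>i\<in>{u..v}. W i * (c * Q (Suc i) - Q i))"
      using Qpart by (intro mult_left_mono) auto
    moreover have "d powr (s-1) * d = d powr s"
    proof (cases "d = 0")
      case True then show ?thesis by simp
    next
      case False
      hence "0 < d" using d0 by simp
      then have "d powr (s-1) * d powr 1 = d powr s" by (subst powr_add[symmetric]) simp
      then show ?thesis using \<open>0 < d\<close> by simp
    qed
    ultimately show ?thesis by linarith
  qed

  define S where "S = (\<lambda>i. \<Sum>j\<in>{i<..n}. D i j)"
  have Snn: "0 \<le> S i" if i: "i \<in> {1..n} - {u..v}" for i
  proof (cases "i < u")
    case True
    have "S i = (\<Sum>j\<in>{u..v}. D i j)" unfolding S_def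
    proof (rule sum.mono_neutral_right)
      show "finite {i<..n}" by simp
      show "{u..v} \<subseteq> {i<..n}" using True uv by auto
      show "\<forall>j\<in>{i<..n} - {u..v}. D i j = 0" using Dz i True by auto
    qed
    then show ?thesis using left[of i] True i by simp
  next
    case False
    hence "v < i" using i by auto
    hence "\<forall>j\<in>{i<..n}. D i j = 0" using Dz i by auto
    then show ?thesis unfolding S_def by simp
  qed
  have Smid: "S i = (\<Sum>j\<in>{i<..v}. D i j) + (\<Sum>j\<in>{v<..n}. D i j)" if i: "i \<in> {u..v}" for i
  proof -
    have "{i<..n} = {i<..v} \<union> {v<..n}" using i uv by auto
    then show ?thesis unfolding S_def by (simp add: sum.union_disjoint)
  qed
  have "(\<Sum>i\<in>{u..v}. S i) \<le> (\<Sum>i\<in>{1..n}. S i)"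
    by (rule sum_mono2) (use Snn uv in auto)
  moreover have "(\<Sum>i\<in>{u..v}. S i) = (\<Sum>i\<in>{u..v}. \<Sum>j\<in>{i<..v}. D i j) + (\<Sum>i\<in>{u..v}. \<Sum>j\<in>{v<..n}. D i j)"
    using Smid by (simp add: sum.distrib)
  moreover have "(\<Sum>i\<in>{u..v}. \<Sum>j\<in>{v<..n}. D i j) = (\<Sum>j\<in>{v<..n}. \<Sum>i\<in>{u..v}. D i j)"
    by (rule sum.swap)
  moreover have "0 \<le> (\<Sum>j\<in>{v<..n}. \<Sum>i\<in>{u..v}. D i j)"
    by (rule sum_nonneg) (use right in auto)
  ultimately show ?thesis using inside unfolding S_def d_def by linarith
qed

lemma geo_in:
  fixes A :: real
  assumes A: "4 \<le> A" and im: "i \<le> m"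
  shows "(\<Sum>j\<in>{i<..m}. A ^ (j - i)) \<le> 4/3 * A ^ (m - i)"
  using im
proof (induction m rule: dec_induct)
  case base then show ?case by simp
next
  case (step m)
  have "{i<..Suc m} = insert (Suc m) {i<..m}" using step.hyps by auto
  hence "(\<Sum>j\<in>{i<..Suc m}. A ^ (j - i)) = A ^ (Suc m - i) + (\<Sum>j\<in>{i<..m}. A ^ (j - i))" by simp
  moreover have "Suc m - i = Suc (m - i)" using step.hyps by simp
  moreover have "4/3 * A ^ (m - i) \<le> 1/3 * (A * A ^ (m - i))"
    using A by (simp add: mult.assoc[symmetric] mult_right_mono)
  ultimately show ?case using step.IH by simp
qed

lemma geo_out:
  fixes A :: real
  assumes A: "4 \<le> A" and im: "i \<le> n"
  shows "(\<Sum>l\<in>{i..<n}. A ^ (n - l)) \<le> 4/3 * A ^ (n - i)"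
  using im
proof (induction i rule: inc_induct)
  case base then show ?case by simp
next
  case (step i)
  have "{i..<n} = insert i {Suc i..<n}" using step.hyps by auto
  hence "(\<Sum>l\<in>{i..<n}. A ^ (n - l)) = A ^ (n - i) + (\<Sum>l\<in>{Suc i..<n}. A ^ (n - l))" by simp
  moreover have "n - i = Suc (n - Suc i)" using step.hyps by simp
  moreover have "4/3 * A ^ (n - Suc i) \<le> 1/3 * (A * A ^ (n - Suc i))"
    using A by (simp add: mult.assoc[symmetric] mult_right_mono)
  ultimately show ?case using step.IH by simp
qed

lemma B_bound:
  fixes A :: real and n :: nat
  assumes A: "4 \<le> A" and n: "2 < n"
  shows "(\<Sum>i\<in>{1..n}. \<Sum>j\<in>{i<..n}. A ^ (j - i)) < 2 * A ^ (n - 1)"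
proof -
  have "{1..n} = insert n {1..<n}" using n by auto
  hence "(\<Sum>i\<in>{1..n}. \<Sum>j\<in>{i<..n}. A ^ (j - i)) = (\<Sum>i\<in>{1..<n}. \<Sum>j\<in>{i<..n}. A ^ (j - i))" by simp
  also have "\<dots> \<le> (\<Sum>i\<in>{1..<n}. 4/3 * A ^ (n - i))"
    by (rule sum_mono) (use geo_in A in auto)
  also have "\<dots> = 4/3 * (\<Sum>i\<in>{1..<n}. A ^ (n - i))" by (simp add: sum_distrib_left)
  also have "\<dots> \<le> 4/3 * (4/3 * A ^ (n - 1))"
    using geo_out[OF A, of 1 n] n by simp
  also have "\<dots> < 2 * A ^ (n - 1)" using A by simp
  finally show ?thesis .
qed

lemma B_two:
  fixes A :: real
  shows "(\<Sum>i\<in>{1..2::nat}. \<Sum>j\<in>{i<..2}. A ^ (j - i)) = A"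
proof -
  have "{1..2::nat} = {1,2}" by auto
  moreover have "{1<..2::nat} = {2}" by auto
  moreover have "{2<..2::nat} = {}" by auto
  ultimately show ?thesis by simp
qed

lemma Phi_bounds:
  fixes s A :: real and z :: "nat \<Rightarrow> real"
  assumes "0 < s" "0 \<le> A" "config n z"
  shows "0 \<le> (\<Sum>i\<in>{1..n}. \<Sum>j\<in>{i<..n}. A ^ (j - i) * (z j - z i) powr s)"
    and "(\<Sum>i\<in>{1..n}. \<Sum>j\<in>{i<..n}. A ^ (j - i) * (z j - z i) powr s) \<le> (\<Sum>i\<in>{1..n}. \<Sum>j\<in>{i<..n}. A ^ (j - i))"
proof -
  show "0 \<le> (\<Sum>i\<in>{1..n}. \<Sum>j\<in>{i<..n}. A ^ (j - i) * (z j - z i) powr s)"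
    using assms by (intro sum_nonneg) auto
  show "(\<Sum>i\<in>{1..n}. \<Sum>j\<in>{i<..n}. A ^ (j - i) * (z j - z i) powr s) \<le> (\<Sum>i\<in>{1..n}. \<Sum>j\<in>{i<..n}. A ^ (j - i))"
  proof (intro sum_mono)
    fix i j assume i: "i \<in> {1..n}" and j: "j \<in> {i<..n}"
    have "z i \<le> z j" "0 \<le> z i" "z j \<le> 1" using assms(3) i j unfolding config_def by auto
    hence "(z j - z i) powr s \<le> 1" using assms(1) by (intro powr_le1) auto
    then show "A ^ (j - i) * (z j - z i) powr s \<le> A ^ (j - i)"
      using assms(2) by (simp add: mult_left_le)
  qed
qed

theorem mainTheorem4:
  fixes \<rho> s :: real and n :: nat
    and x :: "nat \<Rightarrow> nat \<Rightarrow> real" and u v :: "nat \<Rightarrow> nat"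
  assumes "0 < \<rho>" "\<rho> \<le> 1/2" "0 < s" "s \<le> 1" "n \<ge> 2"
    and "twist_system \<rho> n x u v"
  shows "summable (energy_term s x u v) \<and>
         (\<Sum>t. energy_term s x u v t) \<le> (\<Sum>i\<in>{1..n}. \<Sum>j\<in>{i<..n}. (2 / (\<rho> * s)) ^ (j - i)) \<and>
         (n = 2 \<longrightarrow> (\<Sum>t. energy_term s x u v t) \<le> 2 / (\<rho> * s)) \<and>
         (n > 2 \<longrightarrow> (\<Sum>t. energy_term s x u v t) < 2 * (2 / (\<rho> * s)) ^ (n - 1))"
proof -
  define A where "A = 2 / (\<rho> * s)"
  define \<Phi> where "\<Phi> = (\<lambda>z::nat \<Rightarrow> real. \<Sum>i\<in>{1..n}. \<Sum>j\<in>{i<..n}. A ^ (j - i) * (z j - z i) powr s)"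
  define B where "B = (\<Sum>i\<in>{1..n}. \<Sum>j\<in>{i<..n}. A ^ (j - i))"
  have A4: "4 \<le> A"
  proof -
    have "\<rho> * s \<le> 1/2 * 1" using assms by (intro mult_mono) auto
    moreover have "0 < \<rho> * s" using assms by simp
    ultimately show ?thesis unfolding A_def by (simp add: field_simps)
  qed
  have cfg: "\<And>t. config n (x t)" and stp: "\<And>t. twist_step \<rho> n (x t) (x (Suc t)) (u t) (v t)"
    using assms(6) unfolding twist_system_def by auto
  have dec: "energy_term s x u v t \<le> \<Phi> (x t) - \<Phi> (x (Suc t))" for t
  proof -
    have "(x t (v t) - x t (u t)) powr s \<le>
        (\<Sum>i\<in>{1..n}. \<Sum>j\<in>{i<..n}. A ^ (j - i) * ((x t j - x t i) powr s - (x (Suc t) j - x (Suc t) i) powr s))"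
      using step_decrease[OF assms(1-4) cfg stp] unfolding A_def by simp
    also have "\<dots> = \<Phi> (x t) - \<Phi> (x (Suc t))"
      unfolding \<Phi>_def by (simp add: sum_subtractf right_diff_distrib)
    finally show ?thesis unfolding energy_term_def .
  qed
  have nn: "0 \<le> energy_term s x u v t" for t unfolding energy_term_def by simp
  have part: "(\<Sum>t<T. energy_term s x u v t) \<le> \<Phi> (x 0) - \<Phi> (x T)" for T
  proof (induction T)
    case 0 then show ?case by simp
  next
    case (Suc T) then show ?case using dec[of T] by simp
  qed
  have Phib: "0 \<le> \<Phi> (x t)" "\<Phi> (x t) \<le> B" for t
    using Phi_bounds[of s A n "x t"] assms(3) A4 cfg unfolding \<Phi>_def B_def by auto
  have bnd: "(\<Sum>t<T. energy_term s x u v t) \<le> B" for T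
    using part[of T] Phib[of 0] Phib[of T] by linarith
  have sm: "summable (energy_term s x u v)"
    by (rule summableI_nonneg_bounded[OF nn bnd])
  have le: "(\<Sum>t. energy_term s x u v t) \<le> B"
    by (rule suminf_le_const[OF sm bnd])
  have two: "n = 2 \<longrightarrow> (\<Sum>t. energy_term s x u v t) \<le> 2 / (\<rho> * s)"
    using le B_two[of A] unfolding B_def A_def by auto
  have big: "n > 2 \<longrightarrow> (\<Sum>t. energy_term s x u v t) < 2 * (2 / (\<rho> * s)) ^ (n - 1)"
    using le B_bound[OF A4, of n] unfolding B_def A_def by auto
  show ?thesis using sm le two big unfolding B_def A_def by auto
qed

end
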